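(* Let $G=\langle c,q\mid c(qcq^{-1})=(qcq^{-1})c\rangle$. Then \[C_G(qcq^{-1})=\langle c,\ qcq^{-1},\ q^2cq^{-2}\rangle.\]
   Context: $C_G(g)=\{h\in G\mid gh=hg\}$ denotes the centraliser of $g$ in $G$. *)

theory Defs
  imports "HOL-Algebra.Algebra"
begin

text \<open>The group G = < c, q | c (q c q^-1) = (q c q^-1) c > is constructed as a
quotient of the monoid of words in the letters c, q and their formal inverses
by the congruence generated by free cancellation and the relator
[c, q c q^-1] = c q c q^-1 c^-1 q c^-1 q^-1.\<close>

datatype gen = Gc | Gq

type_synonym letter = "gen \<times> bool"  (* True = formal inverse *)

fun inv_letter :: "letter \<Rightarrow> letter" where
  "inv_letter (x, b) = (x, \<not> b)"

definition relator :: "letter list" where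
  "relator = [(Gc,False),(Gq,False),(Gc,False),(Gq,True),
              (Gc,True),(Gq,False),(Gc,True),(Gq,True)]"

inductive pres_eq :: "letter list \<Rightarrow> letter list \<Rightarrow> bool" where
  pres_refl: "pres_eq w w"
| pres_sym: "pres_eq u v \<Longrightarrow> pres_eq v u"
| pres_trans: "pres_eq u v \<Longrightarrow> pres_eq v w \<Longrightarrow> pres_eq u w"
| pres_cancel: "pres_eq (u @ [x, inv_letter x] @ v) (u @ v)"
| pres_rel: "pres_eq (u @ relator @ v) (u @ v)"

definition word_class :: "letter list \<Rightarrow> letter list set" where
  "word_class w = {v. pres_eq w v}"

definition G :: "letter list set monoid" where
  "G = \<lparr> carrier = word_class ` UNIV,
         monoid.mult = (\<lambda>A B. {w. \<exists>a\<in>A. \<exists>b\<in>B. pres_eq (a @ b) w}),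
         one = word_class [] \<rparr>"

definition c_el :: "letter list set" where
  "c_el = word_class [(Gc, False)]"

definition q_el :: "letter list set" where
  "q_el = word_class [(Gq, False)]"

definition centraliser :: "('a, 'b) monoid_scheme \<Rightarrow> 'a \<Rightarrow> 'a set" where
  "centraliser H g = {h \<in> carrier H. g \<otimes>\<^bsub>H\<^esub> h = h \<otimes>\<^bsub>H\<^esub> g}"

end

theory Submission
  imports Defs
begin


lemma pres_eq_cong: "pres_eq u v \<Longrightarrow> pres_eq (a @ u @ b) (a @ v @ b)"
proof (induction rule: pres_eq.induct)
  case (pres_refl w) then show ?case by (rule pres_eq.pres_refl)
next
  case (pres_sym u v) show ?case using pres_sym.IH by (rule pres_eq.pres_sym)
next
  case (pres_trans u v w) then show ?case by (metis pres_eq.pres_trans)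
next
  case (pres_cancel u x v)
  from pres_eq.pres_cancel[of "a @ u" x "v @ b"] show ?case by simp
next
  case (pres_rel u v)
  from pres_eq.pres_rel[of "a @ u" "v @ b"] show ?case by simp
qed

lemma pres_eq_app: "pres_eq u u' \<Longrightarrow> pres_eq v v' \<Longrightarrow> pres_eq (u @ v) (u' @ v')"
  by (metis pres_eq_cong[of u u' "[]" v] pres_eq_cong[of v v' u' "[]"] append_Nil append_Nil2 pres_eq.pres_trans)

lemma word_class_eq: "word_class u = word_class v \<longleftrightarrow> pres_eq u v"
  unfolding word_class_def
  by (auto intro: pres_eq.pres_refl pres_eq.pres_trans pres_eq.pres_sym)

lemma G_mult: "word_class a \<otimes>\<^bsub>G\<^esub> word_class b = word_class (a @ b)"
  unfolding G_def word_class_def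
  by (auto intro: pres_eq.pres_refl pres_eq.pres_trans pres_eq_app)

lemma G_carrier: "carrier G = range word_class" by (simp add: G_def)
lemma G_one: "\<one>\<^bsub>G\<^esub> = word_class []" by (simp add: G_def)

definition inv_word :: "letter list \<Rightarrow> letter list" where
  "inv_word w = rev (map inv_letter w)"

lemma inv_letter_inv: "inv_letter (inv_letter x) = x"
  by (cases x) simp

lemma inv_word_cancel: "pres_eq (inv_word w @ w) []"
proof (induction w)
  case Nil then show ?case by (simp add: inv_word_def pres_eq.pres_refl)
next
  case (Cons x w)
  have "pres_eq (inv_word w @ [inv_letter x, inv_letter (inv_letter x)] @ w) (inv_word w @ w)"
    by (rule pres_eq.pres_cancel)
  then show ?case using Cons
    by (simp add: inv_word_def inv_letter_inv) (metis pres_eq.pres_trans)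
qed

lemma group_G: "group G"
proof (rule groupI)
  fix x y assume "x \<in> carrier G" "y \<in> carrier G"
  then show "x \<otimes>\<^bsub>G\<^esub> y \<in> carrier G" by (auto simp: G_carrier G_mult)
next
  show "\<one>\<^bsub>G\<^esub> \<in> carrier G" by (simp add: G_carrier G_one)
next
  fix x y z assume "x \<in> carrier G" "y \<in> carrier G" "z \<in> carrier G"
  then show "x \<otimes>\<^bsub>G\<^esub> y \<otimes>\<^bsub>G\<^esub> z = x \<otimes>\<^bsub>G\<^esub> (y \<otimes>\<^bsub>G\<^esub> z)"
    by (auto simp: G_carrier G_mult)
next
  fix x assume "x \<in> carrier G"
  then show "\<one>\<^bsub>G\<^esub> \<otimes>\<^bsub>G\<^esub> x = x" by (auto simp: G_carrier G_mult G_one)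
next
  fix x assume "x \<in> carrier G"
  then obtain w where w: "x = word_class w" by (auto simp: G_carrier)
  show "\<exists>y\<in>carrier G. y \<otimes>\<^bsub>G\<^esub> x = \<one>\<^bsub>G\<^esub>"
    by (rule bexI[of _ "word_class (inv_word w)"])
       (auto simp: w G_mult G_one word_class_eq inv_word_cancel G_carrier)
qed

interpretation Gr: group G by (rule group_G)




datatype nf = Fin int int | Cns int bool nf

fun ab :: "bool \<Rightarrow> int \<Rightarrow> nf \<Rightarrow> nf" where
  "ab x k (Fin a b) = (if x then Fin a (b+k) else Fin (a+k) b)"
| "ab x k (Cns m e r) = (if x = e then Cns (m+k) e r else Cns m e (ab e k r))"

fun tact :: "bool \<Rightarrow> nf \<Rightarrow> nf" where
  "tact s (Fin a b) = Cns 0 s (Fin a b)"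
| "tact s (Cns m e r) = (if e \<noteq> s \<and> m = 0 then r else Cns 0 s (Cns m e r))"

fun headok :: "bool \<Rightarrow> nf \<Rightarrow> bool" where
  "headok e (Fin a b) = True"
| "headok e (Cns m e' r) = (e = e' \<or> m \<noteq> 0)"

fun valid :: "nf \<Rightarrow> bool" where
  "valid (Fin a b) = True"
| "valid (Cns m e r) = (valid r \<and> headok e r)"

fun lact :: "letter \<Rightarrow> nf \<Rightarrow> nf" where
  "lact (Gc, b) = ab False (if b then -1 else 1)"
| "lact (Gq, b) = tact b"

definition act :: "letter list \<Rightarrow> nf \<Rightarrow> nf" where
  "act w y = foldr lact w y"

fun shift :: "nf \<Rightarrow> nf" where
  "shift (Fin a b) = Fin a (b+1)"
| "shift (Cns m e r) = Cns m e (shift r)"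

lemma headok_ab: "headok e (ab e k r) = headok e r"
  by (cases r) auto

lemma ab_valid: "valid y \<Longrightarrow> valid (ab x k y)"
  by (induction y arbitrary: x) (auto simp: headok_ab)

lemma ab_add: "ab x k (ab x l y) = ab x (l+k) y"
  by (induction y arbitrary: x) (auto simp: algebra_simps)

lemma ab_zero: "ab x 0 y = y"
  by (induction y arbitrary: x) auto

lemma ab_comm: "ab x k (ab (\<not>x) l y) = ab (\<not>x) l (ab x k y)"
  by (cases y) auto

lemma tact_valid: "valid y \<Longrightarrow> valid (tact s y)"
  by (cases y) auto

lemma tact_inv: "valid y \<Longrightarrow> tact s (tact (\<not>s) y) = y"
proof (cases y)
  case (Cns m e r)
  assume v: "valid y"
  show ?thesis
  proof (cases "e = s \<and> m = 0")
    case True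
    with v Cns show ?thesis by (cases r) auto
  qed (use Cns in auto)
qed auto

lemma D_lemma: "valid y \<Longrightarrow> tact False (ab False k (tact True y)) = ab True k y"
proof (cases y)
  case (Cns m e r)
  assume v: "valid y"
  show ?thesis
  proof (cases "\<not> e \<and> m = 0")
    case True
    with v Cns show ?thesis by (cases r) auto
  qed (use Cns in auto)
qed auto

lemma lact_valid: "valid y \<Longrightarrow> valid (lact s y)"
  by (cases s; cases "fst s") (auto simp: ab_valid tact_valid)

lemma lact_cancel: "valid y \<Longrightarrow> lact x (lact (inv_letter x) y) = y"
proof (cases x)
  case (Pair g b)
  assume v: "valid y"
  show ?thesis
  proof (cases g)
    case Gc then show ?thesis using Pair by (auto simp: ab_add ab_zero)
  next
    case Gq then show ?thesis using Pair v tact_inv[of y b] by auto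
  qed
qed

lemma act_valid: "valid y \<Longrightarrow> valid (act w y)"
  by (induction w) (auto simp: act_def lact_valid)

lemma act_append: "act (u @ v) y = act u (act v y)"
  by (simp add: act_def)

lemma relator_act: "valid y \<Longrightarrow> act relator y = y"
proof -
  assume v: "valid y"
  have "act relator y = ab False 1 (tact False (ab False 1 (tact True (ab False (-1)
           (tact False (ab False (-1) (tact True y)))))))"
    by (simp add: act_def relator_def)
  also have "tact False (ab False (-1) (tact True y)) = ab True (-1) y"
    using v by (rule D_lemma)
  also have "tact False (ab False 1 (tact True (ab False (-1) (ab True (-1) y)))) =
     ab True 1 (ab False (-1) (ab True (-1) y))"
    using v by (intro D_lemma ab_valid)
  also have "ab False 1 (ab True 1 (ab False (-1) (ab True (-1) y))) = y"
    using ab_comm[of False 1 1]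
    by (simp add: ab_add ab_zero)
  finally show ?thesis .
qed

lemma act_resp: "pres_eq u v \<Longrightarrow> valid y \<Longrightarrow> act u y = act v y"
proof (induction u v arbitrary: y rule: pres_eq.induct)
  case (pres_cancel u x v)
  then show ?case
    using lact_cancel[of "act v y" x] act_valid[of y v]
    by (simp add: act_append act_def)
next
  case (pres_rel u v)
  then show ?case
    using relator_act[of "act v y"] act_valid[of y v]
    by (simp add: act_append)
qed auto

lemma ab_shift: "ab x k (shift y) = shift (ab x k y)"
  by (induction y arbitrary: x) auto

lemma tact_shift: "tact s (shift y) = shift (tact s y)"
  by (cases y) auto

lemma lact_shift: "lact s (shift y) = shift (lact s y)"
  by (cases s; cases "fst s") (auto simp: ab_shift tact_shift)

lemma act_shift: "act w (shift y) = shift (act w y)"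
  by (induction w) (auto simp: act_def lact_shift)




lemma (in group) comm_from_rel:
  assumes "a \<in> carrier G" "b \<in> carrier G" "a \<otimes> b \<otimes> inv a \<otimes> inv b = \<one>"
  shows "a \<otimes> b = b \<otimes> a"
proof -
  have "a \<otimes> b \<otimes> inv a \<otimes> inv b \<otimes> b \<otimes> a = b \<otimes> a" using assms by simp
  then show ?thesis using assms by (simp add: m_assoc)
qed

lemma (in group) conj_hom:
  assumes "g \<in> carrier G"
  shows "(\<lambda>x. g \<otimes> x \<otimes> inv g) \<in> hom G G"
proof -
  have *: "\<And>z. z \<in> carrier G \<Longrightarrow> inv g \<otimes> (g \<otimes> z) = z"
    using assms by (simp add: m_assoc[symmetric])
  show ?thesis using assms by (intro homI) (auto simp: m_assoc *)
qed

lemma (in group) conj_pow: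
  assumes "g \<in> carrier G" "a \<in> carrier G"
  shows "g \<otimes> a [^] (k::int) \<otimes> inv g = (g \<otimes> a \<otimes> inv g) [^] k"
  using hom_int_pow[OF conj_hom[OF assms(1)] assms(2) is_group is_group] by simp

lemma (in group) comm_pow1:
  assumes "a \<in> carrier G" "b \<in> carrier G" "a \<otimes> b = b \<otimes> a"
  shows "a \<otimes> b [^] (j::int) = b [^] j \<otimes> a"
proof -
  have "a \<otimes> b \<otimes> inv a = b" using assms by (simp add: m_assoc)
  then have "a \<otimes> b [^] j \<otimes> inv a = b [^] j" using conj_pow[OF assms(1,2)] by simp
  then show ?thesis using assms by (metis inv_solve_right int_pow_closed m_closed inv_closed)
qed

lemma (in group) comm_pow:
  assumes "a \<in> carrier G" "b \<in> carrier G" "a \<otimes> b = b \<otimes> a"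
  shows "a [^] (i::int) \<otimes> b [^] (j::int) = b [^] j \<otimes> a [^] i"
proof -
  have "a \<otimes> b [^] j = b [^] j \<otimes> a" using comm_pow1[OF assms] .
  then have "b [^] j \<otimes> a = a \<otimes> b [^] j" by simp
  from comm_pow1[OF _ assms(1) this] assms show ?thesis by simp
qed

lemma (in group) comm_left:
  assumes "a \<in> carrier G" "b \<in> carrier G" "x \<in> carrier G" "a \<otimes> b = b \<otimes> a"
  shows "a \<otimes> (b \<otimes> x) = b \<otimes> (a \<otimes> x)"
  using assms by (metis m_assoc)

definition d_el :: "letter list set" where
  "d_el = q_el \<otimes>\<^bsub>G\<^esub> c_el \<otimes>\<^bsub>G\<^esub> inv\<^bsub>G\<^esub> q_el"

lemma c_carr[simp]: "c_el \<in> carrier G" by (simp add: c_el_def G_carrier)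
lemma q_carr[simp]: "q_el \<in> carrier G" by (simp add: q_el_def G_carrier)
lemma d_carr[simp]: "d_el \<in> carrier G" by (simp add: d_el_def)

lemma wc_cons: "word_class (x # w) = word_class [x] \<otimes>\<^bsub>G\<^esub> word_class w"
  by (simp add: G_mult)

lemma inv_c: "inv\<^bsub>G\<^esub> c_el = word_class [(Gc,True)]"
proof -
  have "word_class [(Gc,True)] \<otimes>\<^bsub>G\<^esub> c_el = \<one>\<^bsub>G\<^esub>"
    using pres_eq.pres_cancel[of "[]" "(Gc,True)" "[]"]
    by (simp add: c_el_def G_mult G_one word_class_eq)
  then show ?thesis by (intro Gr.inv_equality) (auto simp: G_carrier c_el_def q_el_def)
qed

lemma inv_q: "inv\<^bsub>G\<^esub> q_el = word_class [(Gq,True)]"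
proof -
  have "word_class [(Gq,True)] \<otimes>\<^bsub>G\<^esub> q_el = \<one>\<^bsub>G\<^esub>"
    using pres_eq.pres_cancel[of "[]" "(Gq,True)" "[]"]
    by (simp add: q_el_def G_mult G_one word_class_eq)
  then show ?thesis by (intro Gr.inv_equality) (auto simp: G_carrier c_el_def q_el_def)
qed

lemma d_word: "d_el = word_class [(Gq,False),(Gc,False),(Gq,True)]"
  unfolding d_el_def inv_q by (simp add: c_el_def q_el_def G_mult)

lemma inv_d: "inv\<^bsub>G\<^esub> d_el = word_class [(Gq,False),(Gc,True),(Gq,True)]"
proof -
  have "pres_eq [(Gq,False),(Gc,True),(Gq,True),(Gq,False),(Gc,False),(Gq,True)] []"
  proof -
    have 1: "pres_eq [(Gq,False),(Gc,True),(Gq,True),(Gq,False),(Gc,False),(Gq,True)]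
          [(Gq,False),(Gc,True),(Gc,False),(Gq,True)]"
      using pres_eq.pres_cancel[of "[(Gq,False),(Gc,True)]" "(Gq,True)" "[(Gc,False),(Gq,True)]"] by simp
    have 2: "pres_eq [(Gq,False),(Gc,True),(Gc,False),(Gq,True)] [(Gq,False),(Gq,True)]"
      using pres_eq.pres_cancel[of "[(Gq,False)]" "(Gc,True)" "[(Gq,True)]"] by simp
    have 3: "pres_eq [(Gq,False),(Gq,True)] []"
      using pres_eq.pres_cancel[of "[]" "(Gq,False)" "[]"] by simp
    show ?thesis by (rule pres_eq.pres_trans[OF pres_eq.pres_trans[OF 1 2] 3])
  qed
  then have "word_class [(Gq,False),(Gc,True),(Gq,True)] \<otimes>\<^bsub>G\<^esub> d_el = \<one>\<^bsub>G\<^esub>"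
    by (simp add: d_word G_mult G_one word_class_eq)
  then show ?thesis by (intro Gr.inv_equality) (auto simp: G_carrier d_word)
qed

lemma cd_comm: "c_el \<otimes>\<^bsub>G\<^esub> d_el = d_el \<otimes>\<^bsub>G\<^esub> c_el"
proof -
  have "word_class relator = \<one>\<^bsub>G\<^esub>"
    using pres_eq.pres_rel[of "[]" "[]"] by (simp add: G_one word_class_eq)
  moreover have "word_class relator = c_el \<otimes>\<^bsub>G\<^esub> d_el \<otimes>\<^bsub>G\<^esub> inv\<^bsub>G\<^esub> c_el \<otimes>\<^bsub>G\<^esub> inv\<^bsub>G\<^esub> d_el"
    unfolding inv_d inv_c unfolding d_word by (simp add: c_el_def G_mult relator_def)
  ultimately show ?thesis by (intro Gr.comm_from_rel) auto
qed




definition gp :: "bool \<Rightarrow> int \<Rightarrow> letter list set" where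
  "gp x k = (if x then d_el else c_el) [^]\<^bsub>G\<^esub> k"

definition tg :: "bool \<Rightarrow> letter list set" where
  "tg s = (if s then inv\<^bsub>G\<^esub> q_el else q_el)"

fun evalG :: "nf \<Rightarrow> letter list set" where
  "evalG (Fin a b) = c_el [^]\<^bsub>G\<^esub> a \<otimes>\<^bsub>G\<^esub> d_el [^]\<^bsub>G\<^esub> b"
| "evalG (Cns m e r) = gp e m \<otimes>\<^bsub>G\<^esub> tg e \<otimes>\<^bsub>G\<^esub> evalG r"

lemma gp_carr[simp]: "gp x k \<in> carrier G" by (simp add: gp_def)
lemma tg_carr[simp]: "tg s \<in> carrier G" by (simp add: tg_def)
lemma evalG_carr[simp]: "evalG y \<in> carrier G" by (induction y) auto

lemma qcq_pow: "q_el \<otimes>\<^bsub>G\<^esub> c_el [^]\<^bsub>G\<^esub> (k::int) \<otimes>\<^bsub>G\<^esub> inv\<^bsub>G\<^esub> q_el = d_el [^]\<^bsub>G\<^esub> k"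
  using Gr.conj_pow[of q_el c_el k] by (simp add: d_el_def)

lemma Qq: "z \<in> carrier G \<Longrightarrow> inv\<^bsub>G\<^esub> q_el \<otimes>\<^bsub>G\<^esub> (q_el \<otimes>\<^bsub>G\<^esub> z) = z"
  by (metis Gr.inv_closed Gr.l_inv Gr.l_one Gr.m_assoc q_carr)

lemma dq: "z \<in> carrier G \<Longrightarrow> d_el [^]\<^bsub>G\<^esub> (k::int) \<otimes>\<^bsub>G\<^esub> (q_el \<otimes>\<^bsub>G\<^esub> z) = q_el \<otimes>\<^bsub>G\<^esub> (c_el [^]\<^bsub>G\<^esub> k \<otimes>\<^bsub>G\<^esub> z)"
  by (simp add: qcq_pow[symmetric] Gr.m_assoc Qq)

lemma cQ: "z \<in> carrier G \<Longrightarrow> c_el [^]\<^bsub>G\<^esub> (k::int) \<otimes>\<^bsub>G\<^esub> (inv\<^bsub>G\<^esub> q_el \<otimes>\<^bsub>G\<^esub> z) = inv\<^bsub>G\<^esub> q_el \<otimes>\<^bsub>G\<^esub> (d_el [^]\<^bsub>G\<^esub> k \<otimes>\<^bsub>G\<^esub> z)"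
  by (simp add: qcq_pow[symmetric] Gr.m_assoc Qq)

lemma cd_pow: "z \<in> carrier G \<Longrightarrow> c_el [^]\<^bsub>G\<^esub> (k::int) \<otimes>\<^bsub>G\<^esub> (d_el [^]\<^bsub>G\<^esub> (m::int) \<otimes>\<^bsub>G\<^esub> z) = d_el [^]\<^bsub>G\<^esub> m \<otimes>\<^bsub>G\<^esub> (c_el [^]\<^bsub>G\<^esub> k \<otimes>\<^bsub>G\<^esub> z)"
  using Gr.comm_pow[OF c_carr d_carr cd_comm, of k m]
  by (simp flip: Gr.m_assoc)

lemma pow_add: "x \<in> carrier G \<Longrightarrow> z \<in> carrier G \<Longrightarrow> x [^]\<^bsub>G\<^esub> (k::int) \<otimes>\<^bsub>G\<^esub> (x [^]\<^bsub>G\<^esub> (m::int) \<otimes>\<^bsub>G\<^esub> z) = x [^]\<^bsub>G\<^esub> (m + k) \<otimes>\<^bsub>G\<^esub> z"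
  using Gr.int_pow_mult[of x k m] by (simp add: Gr.m_assoc add.commute)

lemma ab_eval: "gp x k \<otimes>\<^bsub>G\<^esub> evalG y = evalG (ab x k y)"
proof (induction y arbitrary: x)
  case (Fin a b)
  show ?case
  proof (cases x)
    case True
    have "d_el [^]\<^bsub>G\<^esub> k \<otimes>\<^bsub>G\<^esub> (c_el [^]\<^bsub>G\<^esub> a \<otimes>\<^bsub>G\<^esub> d_el [^]\<^bsub>G\<^esub> b)
        = c_el [^]\<^bsub>G\<^esub> a \<otimes>\<^bsub>G\<^esub> (d_el [^]\<^bsub>G\<^esub> k \<otimes>\<^bsub>G\<^esub> d_el [^]\<^bsub>G\<^esub> b)"
      using cd_pow[of "d_el [^]\<^bsub>G\<^esub> b" a k] by (simp add: Gr.m_assoc)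
    also have "\<dots> = c_el [^]\<^bsub>G\<^esub> a \<otimes>\<^bsub>G\<^esub> d_el [^]\<^bsub>G\<^esub> (b + k)"
      using Gr.int_pow_mult[of d_el k b] by (simp add: add.commute)
    finally show ?thesis using True by (simp add: gp_def)
  next
    case False
    then show ?thesis using pow_add[of c_el "d_el [^]\<^bsub>G\<^esub> b" k a]
      by (simp add: gp_def Gr.m_assoc)
  qed
next
  case (Cns m e r)
  show ?case
  proof (cases "x = e")
    case True
    then show ?thesis
      using pow_add[of "if e then d_el else c_el" "tg e \<otimes>\<^bsub>G\<^esub> evalG r" k m]
      by (simp add: gp_def Gr.m_assoc)
  next
    case False
    then have x: "x = (\<not> e)" by auto
    show ?thesis
    proof (cases e)
      case True
      have "c_el [^]\<^bsub>G\<^esub> k \<otimes>\<^bsub>G\<^esub> (d_el [^]\<^bsub>G\<^esub> m \<otimes>\<^bsub>G\<^esub> (inv\<^bsub>G\<^esub> q_el \<otimes>\<^bsub>G\<^esub> evalG r))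
          = d_el [^]\<^bsub>G\<^esub> m \<otimes>\<^bsub>G\<^esub> (inv\<^bsub>G\<^esub> q_el \<otimes>\<^bsub>G\<^esub> (d_el [^]\<^bsub>G\<^esub> k \<otimes>\<^bsub>G\<^esub> evalG r))"
        by (simp add: cd_pow cQ)
      then show ?thesis using True x Cns.IH[of True]
        by (simp add: gp_def tg_def Gr.m_assoc)
    next
      case False
      have "d_el [^]\<^bsub>G\<^esub> k \<otimes>\<^bsub>G\<^esub> (c_el [^]\<^bsub>G\<^esub> m \<otimes>\<^bsub>G\<^esub> (q_el \<otimes>\<^bsub>G\<^esub> evalG r))
          = c_el [^]\<^bsub>G\<^esub> m \<otimes>\<^bsub>G\<^esub> (q_el \<otimes>\<^bsub>G\<^esub> (c_el [^]\<^bsub>G\<^esub> k \<otimes>\<^bsub>G\<^esub> evalG r))"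
        by (simp add: cd_pow[symmetric] dq)
      then show ?thesis using False x Cns.IH[of False]
        by (simp add: gp_def tg_def Gr.m_assoc)
    qed
  qed
qed

lemma tact_eval: "tg s \<otimes>\<^bsub>G\<^esub> evalG y = evalG (tact s y)"
proof (cases y)
  case (Fin a b)
  then show ?thesis by (simp add: gp_def)
next
  case (Cns m e r)
  show ?thesis
  proof (cases "e \<noteq> s \<and> m = 0")
    case True
    then have "tg s \<otimes>\<^bsub>G\<^esub> tg e = \<one>\<^bsub>G\<^esub>" by (cases s) (auto simp: tg_def)
    then have "tg s \<otimes>\<^bsub>G\<^esub> (tg e \<otimes>\<^bsub>G\<^esub> evalG r) = evalG r"
      by (simp flip: Gr.m_assoc)
    then show ?thesis using Cns True by (simp add: gp_def Gr.m_assoc)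
  next
    case False
    then show ?thesis using Cns by (auto simp: gp_def)
  qed
qed

lemma lact_eval: "word_class [s] \<otimes>\<^bsub>G\<^esub> evalG y = evalG (lact s y)"
proof (cases s)
  case (Pair g b)
  show ?thesis
  proof (cases g)
    case Gc
    have "word_class [s] = gp False (if b then -1 else 1)"
      using Gc Pair by (auto simp: gp_def c_el_def[symmetric] inv_c[symmetric] Gr.int_pow_neg)
    then show ?thesis using Gc Pair by (simp add: ab_eval)
  next
    case Gq
    have "word_class [s] = tg b"
      using Gq Pair by (auto simp: tg_def q_el_def[symmetric] inv_q[symmetric])
    then show ?thesis using Gq Pair by (simp add: tact_eval)
  qed
qed

lemma word_eval: "word_class w = evalG (act w (Fin 0 0))"
proof (induction w)
  case Nil then show ?case by (simp add: act_def G_one G_mult)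
next
  case (Cons s w)
  then show ?case by (simp add: wc_cons[of s w] lact_eval act_def)
qed




definition c2_el :: "letter list set" where
  "c2_el = (q_el [^]\<^bsub>G\<^esub> (2::nat)) \<otimes>\<^bsub>G\<^esub> c_el \<otimes>\<^bsub>G\<^esub> inv\<^bsub>G\<^esub> (q_el [^]\<^bsub>G\<^esub> (2::nat))"

definition Hs :: "letter list set set" where
  "Hs = generate G {c_el, d_el, c2_el}"

lemma c2_conj: "c2_el = q_el \<otimes>\<^bsub>G\<^esub> d_el \<otimes>\<^bsub>G\<^esub> inv\<^bsub>G\<^esub> q_el"
proof -
  have "q_el [^]\<^bsub>G\<^esub> (2::nat) = q_el \<otimes>\<^bsub>G\<^esub> q_el"
    by (simp add: numeral_2_eq_2)
  then show ?thesis
    by (simp add: c2_el_def d_el_def Gr.inv_mult_group Gr.m_assoc)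
qed

lemma c2_carr[simp]: "c2_el \<in> carrier G" by (simp add: c2_conj)

lemma gens_carr: "{c_el, d_el, c2_el} \<subseteq> carrier G" by simp

lemma Hs_sub: "subgroup Hs G"
  unfolding Hs_def by (rule Gr.generate_is_subgroup[OF gens_carr])

lemma c_in[simp]: "c_el \<in> Hs" and d_in[simp]: "d_el \<in> Hs" and c2_in[simp]: "c2_el \<in> Hs"
  unfolding Hs_def by (auto intro: generate.incl)

lemma Hs_mult: "x \<in> Hs \<Longrightarrow> y \<in> Hs \<Longrightarrow> x \<otimes>\<^bsub>G\<^esub> y \<in> Hs"
  using Hs_sub by (rule subgroup.m_closed)

lemma Hs_pow: "x \<in> Hs \<Longrightarrow> x [^]\<^bsub>G\<^esub> (k::int) \<in> Hs"
  using Gr.subgroup_int_pow_closed[OF Hs_sub] by blast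

lemma qdq_pow: "q_el \<otimes>\<^bsub>G\<^esub> d_el [^]\<^bsub>G\<^esub> (k::int) \<otimes>\<^bsub>G\<^esub> inv\<^bsub>G\<^esub> q_el = c2_el [^]\<^bsub>G\<^esub> k"
  using Gr.conj_pow[of q_el d_el k] by (simp add: c2_conj)

lemma struct_lemma:
  "(ab True 1 x = shift x \<longrightarrow> evalG x \<in> Hs) \<and> (ab False 1 x = shift x \<longrightarrow> q_el \<otimes>\<^bsub>G\<^esub> evalG x \<in> Hs)"
proof (induction x)
  case (Fin a b)
  then show ?case by (auto intro!: Hs_mult Hs_pow)
next
  case (Cns m e r)
  show ?case
  proof (cases e)
    case True
    have "q_el \<otimes>\<^bsub>G\<^esub> evalG (Cns m e r) = (q_el \<otimes>\<^bsub>G\<^esub> d_el [^]\<^bsub>G\<^esub> m \<otimes>\<^bsub>G\<^esub> inv\<^bsub>G\<^esub> q_el) \<otimes>\<^bsub>G\<^esub> evalG r"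
      using True by (simp add: gp_def tg_def Gr.m_assoc)
    also have "\<dots> = c2_el [^]\<^bsub>G\<^esub> m \<otimes>\<^bsub>G\<^esub> evalG r" by (simp add: qdq_pow)
    finally show ?thesis using True Cns.IH by (auto intro!: Hs_mult Hs_pow)
  next
    case False
    have "evalG (Cns m e r) = c_el [^]\<^bsub>G\<^esub> m \<otimes>\<^bsub>G\<^esub> (q_el \<otimes>\<^bsub>G\<^esub> evalG r)"
      using False by (simp add: gp_def tg_def Gr.m_assoc)
    then show ?thesis using False Cns.IH by (auto intro!: Hs_mult Hs_pow)
  qed
qed

lemma (in group) comm_inv:
  assumes "a \<in> carrier G" "h \<in> carrier G" "a \<otimes> h = h \<otimes> a"
  shows "a \<otimes> inv h = inv h \<otimes> a"
  using comm_pow1[OF assms, of "-1"] assms by (simp add: int_pow_neg)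

lemma (in group) comm_mult:
  assumes "a \<in> carrier G" "x \<in> carrier G" "y \<in> carrier G" "a \<otimes> x = x \<otimes> a" "a \<otimes> y = y \<otimes> a"
  shows "a \<otimes> (x \<otimes> y) = x \<otimes> y \<otimes> a"
  using assms by (metis m_assoc)

lemma d_c2: "d_el \<otimes>\<^bsub>G\<^esub> c2_el = c2_el \<otimes>\<^bsub>G\<^esub> d_el"
proof -
  have "d_el \<otimes>\<^bsub>G\<^esub> c2_el = q_el \<otimes>\<^bsub>G\<^esub> (c_el \<otimes>\<^bsub>G\<^esub> d_el) \<otimes>\<^bsub>G\<^esub> inv\<^bsub>G\<^esub> q_el"
    by (simp add: c2_conj d_el_def[of] Gr.m_assoc Qq)
  also have "\<dots> = q_el \<otimes>\<^bsub>G\<^esub> (d_el \<otimes>\<^bsub>G\<^esub> c_el) \<otimes>\<^bsub>G\<^esub> inv\<^bsub>G\<^esub> q_el"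
    by (simp add: cd_comm)
  also have "\<dots> = c2_el \<otimes>\<^bsub>G\<^esub> d_el"
    by (simp add: c2_conj d_el_def Gr.m_assoc Qq)
  finally show ?thesis .
qed

lemma Hs_cent: "Hs \<subseteq> centraliser G d_el"
proof
  fix h assume "h \<in> Hs"
  then show "h \<in> centraliser G d_el"
    unfolding Hs_def
  proof (induction rule: generate.induct)
    case one then show ?case by (simp add: centraliser_def)
  next
    case (incl h) then show ?case using cd_comm d_c2 by (auto simp: centraliser_def)
  next
    case (inv h)
    then have "h \<in> carrier G" "d_el \<otimes>\<^bsub>G\<^esub> h = h \<otimes>\<^bsub>G\<^esub> d_el" using cd_comm d_c2 by auto
    then show ?case by (simp add: centraliser_def Gr.comm_inv)
  next
    case (eng h1 h2)
    then show ?case by (simp add: centraliser_def Gr.comm_mult)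
  qed
qed

lemma cent_Hs: "centraliser G d_el \<subseteq> Hs"
proof
  fix h assume h: "h \<in> centraliser G d_el"
  then obtain w where w: "h = word_class w" by (auto simp: centraliser_def G_carrier)
  define x where "x = act w (Fin 0 0)"
  have vx: "valid x" unfolding x_def by (rule act_valid) simp
  have "d_el \<otimes>\<^bsub>G\<^esub> h = h \<otimes>\<^bsub>G\<^esub> d_el" using h by (simp add: centraliser_def)
  then have "word_class ([(Gq,False),(Gc,False),(Gq,True)] @ w) = word_class (w @ [(Gq,False),(Gc,False),(Gq,True)])"
    by (simp add: w d_word G_mult)
  then have "pres_eq ([(Gq,False),(Gc,False),(Gq,True)] @ w) (w @ [(Gq,False),(Gc,False),(Gq,True)])"
    by (simp add: word_class_eq)
  then have "act ([(Gq,False),(Gc,False),(Gq,True)] @ w) (Fin 0 0) = act (w @ [(Gq,False),(Gc,False),(Gq,True)]) (Fin 0 0)"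
    by (rule act_resp) simp
  moreover have "act ([(Gq,False),(Gc,False),(Gq,True)] @ w) (Fin 0 0) = ab True 1 x"
    using D_lemma[OF vx, of 1] unfolding x_def by (simp add: act_def)
  moreover have "act (w @ [(Gq,False),(Gc,False),(Gq,True)]) (Fin 0 0) = shift x"
  proof -
    have "act [(Gq,False),(Gc,False),(Gq,True)] (Fin 0 0) = shift (Fin 0 0)" by (simp add: act_def)
    then show ?thesis using act_shift[of w "Fin 0 0"] by (simp add: act_append x_def)
  qed
  ultimately have "ab True 1 x = shift x" by simp
  then have "evalG x \<in> Hs" using struct_lemma by blast
  moreover have "h = evalG x" using w word_eval x_def by simp
  ultimately show "h \<in> Hs" by simp
qed

theorem mainTheorem10:
  shows "centraliser G (q_el \<otimes>\<^bsub>G\<^esub> c_el \<otimes>\<^bsub>G\<^esub> inv\<^bsub>G\<^esub> q_el)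
       = generate G {c_el,
                     q_el \<otimes>\<^bsub>G\<^esub> c_el \<otimes>\<^bsub>G\<^esub> inv\<^bsub>G\<^esub> q_el,
                     (q_el [^]\<^bsub>G\<^esub> (2::nat)) \<otimes>\<^bsub>G\<^esub> c_el \<otimes>\<^bsub>G\<^esub> inv\<^bsub>G\<^esub> (q_el [^]\<^bsub>G\<^esub> (2::nat))}"
  using Hs_cent cent_Hs unfolding Hs_def c2_el_def d_el_def by blast


end
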